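(* Let $\mathcal E$ be a nest on a complex Banach space $X$ and let $\mathcal J$ be a $\mathcal T(\mathcal E)$-bimodule with essential support function $\Phi^e_{\mathcal J}$. Let $L,N\in\mathcal E$ be such that $L_-\subsetneq\Phi^e_{\mathcal J}(N)$. Then for every $f\in(N_-)^\perp$ and every $x\in L$, the operator $f\otimes x$ lies in $\mathcal J$.
   Context: A nest $\mathcal E$ on $X$ is a family of closed linear subspaces of $X$, totally ordered by inclusion, containing $\{0\}$ and $X$, closed under arbitrary meets $\wedge$ (intersections) and joins $\vee$ (norm-closed linear spans of unions). For $E\in\mathcal E$, $E_-=\vee\{F\in\mathcal E: F\subsetneq E\}$. $\mathcal T(\mathcal E)=\{T\in\mathcal B(X): TE\subseteq E\ \forall E\in\mathcal E\}$. A $\mathcal T(\mathcal E)$-bimodule is a linear subspace $\mathcal J\subseteq\mathcal B(X)$ with $\mathcal T(\mathcal E)\mathcal J\subseteq\mathcal J$ and $\mathcal J\mathcal T(\mathcal E)\subseteq\mathcal J$. For linear subspaces $M,L$ of $X$ with $L$ closed, $M/L$ denotes $\{m+L: m\in M\}\subseteq X/L$ and $\dim(M/L)$ its (algebraic) dimension. The essential support function of $\mathcal J$ is $\Phi^e_{\mathcal J}(N)=\wedge\{L\in\mathcal E: \dim(TN/L)<\infty\ \forall T\in\mathcal J\}$ for $N\in\mathcal E$. For $S\subseteq X$, $S^\perp=\{f\in X^*: f(S)=\{0\}\}$; $f\otimes x$ is the operator $y\mapsto f(y)x$. *)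

theory Defs
  imports "HOL-Analysis.Analysis"
begin

text \<open>Complex Banach spaces: a real Banach space with a compatible complex scalar
multiplication (HOL-Analysis has no complex vector space class).\<close>

class complex_banach = banach +
  fixes scaleC :: "complex \<Rightarrow> 'a \<Rightarrow> 'a" (infixr \<open>*\<^sub>C\<close> 75)
  assumes scaleC_add_right: "a *\<^sub>C (x + y) = a *\<^sub>C x + a *\<^sub>C y"
    and scaleC_add_left: "(a + b) *\<^sub>C x = a *\<^sub>C x + b *\<^sub>C x"
    and scaleC_scaleC: "a *\<^sub>C (b *\<^sub>C x) = (a * b) *\<^sub>C x"
    and scaleC_one: "1 *\<^sub>C x = x"
    and scaleC_of_real: "complex_of_real r *\<^sub>C x = r *\<^sub>R x"
    and norm_scaleC: "norm (a *\<^sub>C x) = cmod a * norm x"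

definition bounded_op :: "('a::complex_banach \<Rightarrow> 'a) \<Rightarrow> bool" where
  "bounded_op T \<longleftrightarrow> (\<forall>x y. T (x + y) = T x + T y) \<and> (\<forall>c x. T (c *\<^sub>C x) = c *\<^sub>C T x)
     \<and> (\<exists>K. \<forall>x. norm (T x) \<le> norm x * K)"

definition bounded_functional :: "('a::complex_banach \<Rightarrow> complex) \<Rightarrow> bool" where
  "bounded_functional f \<longleftrightarrow> (\<forall>x y. f (x + y) = f x + f y) \<and> (\<forall>c x. f (c *\<^sub>C x) = c * f x)
     \<and> (\<exists>K. \<forall>x. norm (f x) \<le> norm x * K)"

definition csubspace :: "'a::complex_banach set \<Rightarrow> bool" where
  "csubspace S \<longleftrightarrow> 0 \<in> S \<and> (\<forall>x\<in>S. \<forall>y\<in>S. x + y \<in> S) \<and> (\<forall>c. \<forall>x\<in>S. c *\<^sub>C x \<in> S)"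

definition closed_csubspace :: "'a::complex_banach set \<Rightarrow> bool" where
  "closed_csubspace S \<longleftrightarrow> csubspace S \<and> closed S"

definition cspan :: "'a::complex_banach set \<Rightarrow> 'a set" where
  "cspan A = \<Inter> {S. csubspace S \<and> A \<subseteq> S}"

definition cjoin :: "'a::complex_banach set set \<Rightarrow> 'a set" where
  "cjoin F = closure (cspan (\<Union> F))"

definition nest :: "'a::complex_banach set set \<Rightarrow> bool" where
  "nest \<E> \<longleftrightarrow> (\<forall>E\<in>\<E>. closed_csubspace E)
     \<and> (\<forall>E\<in>\<E>. \<forall>F\<in>\<E>. E \<subseteq> F \<or> F \<subseteq> E)
     \<and> {0} \<in> \<E> \<and> UNIV \<in> \<E>
     \<and> (\<forall>F. F \<subseteq> \<E> \<longrightarrow> \<Inter> F \<in> \<E>)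
     \<and> (\<forall>F. F \<subseteq> \<E> \<longrightarrow> cjoin F \<in> \<E>)"

definition nest_minus :: "'a::complex_banach set set \<Rightarrow> 'a set \<Rightarrow> 'a set" where
  "nest_minus \<E> E = cjoin {F \<in> \<E>. F \<subset> E}"

definition nest_alg :: "'a::complex_banach set set \<Rightarrow> ('a \<Rightarrow> 'a) set" where
  "nest_alg \<E> = {T. bounded_op T \<and> (\<forall>E\<in>\<E>. T ` E \<subseteq> E)}"

definition bimodule :: "'a::complex_banach set set \<Rightarrow> ('a \<Rightarrow> 'a) set \<Rightarrow> bool" where
  "bimodule \<E> J \<longleftrightarrow> J \<subseteq> {T. bounded_op T}
     \<and> (\<lambda>x. 0) \<in> J \<and> (\<forall>S\<in>J. \<forall>T\<in>J. (\<lambda>x. S x + T x) \<in> J)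
     \<and> (\<forall>c. \<forall>T\<in>J. (\<lambda>x. c *\<^sub>C T x) \<in> J)
     \<and> (\<forall>A\<in>nest_alg \<E>. \<forall>T\<in>J. A \<circ> T \<in> J \<and> T \<circ> A \<in> J)"

text \<open>dim(M/L) < \<infinity>: M/L is contained in the span of finitely many cosets,
i.e. M \<subseteq> span F + L for a finite F.\<close>
definition fin_dim_quot :: "'a::complex_banach set \<Rightarrow> 'a set \<Rightarrow> bool" where
  "fin_dim_quot M L \<longleftrightarrow> (\<exists>F. finite F \<and> M \<subseteq> {u + l | u l. u \<in> cspan F \<and> l \<in> L})"

definition ess_support :: "'a::complex_banach set set \<Rightarrow> ('a \<Rightarrow> 'a) set \<Rightarrow> 'a set \<Rightarrow> 'a set" where
  "ess_support \<E> J N = \<Inter> {L \<in> \<E>. \<forall>T\<in>J. fin_dim_quot (T ` N) L}"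

definition annihilator :: "'a::complex_banach set \<Rightarrow> ('a \<Rightarrow> complex) set" where
  "annihilator S = {f. bounded_functional f \<and> (\<forall>x\<in>S. f x = 0)}"

definition rank_one :: "('a::complex_banach \<Rightarrow> complex) \<Rightarrow> 'a \<Rightarrow> 'a \<Rightarrow> 'a" where
  "rank_one f x = (\<lambda>y. f y *\<^sub>C x)"

end

theory Submission
  imports Defs
begin

definition good :: "('a::real_normed_vector \<times> real) set \<Rightarrow> bool" where
 "good G \<longleftrightarrow> (0,0) \<in> G \<and> (\<forall>x a y b. (x,a)\<in>G \<longrightarrow> (y,b)\<in>G \<longrightarrow> (x+y,a+b)\<in>G)
   \<and> (\<forall>t x a. (x,a)\<in>G \<longrightarrow> (t *\<^sub>R x, t*a)\<in>G)
   \<and> (\<forall>x a b. (x,a)\<in>G \<longrightarrow> (x,b)\<in>G \<longrightarrow> a=b)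
   \<and> (\<forall>x a. (x,a)\<in>G \<longrightarrow> a \<le> norm x)"

lemma good_extend:
  assumes g: "good G" and x0: "\<forall>a. (x0,a) \<notin> G"
  shows "\<exists>G'. good G' \<and> G \<subset> G'"
proof -
  define S where "S = {a - norm (x - x0) | x a. (x,a)\<in>G}"
  have G0: "(0,0) \<in> G" using g by (simp add: good_def)
  have key: "a - norm (x - x0) \<le> norm (y + x0) - b" if "(x,a)\<in>G" "(y,b)\<in>G" for x a y b
  proof -
    have "(x+y,a+b)\<in>G" using g that by (simp add: good_def)
    then have "a+b \<le> norm (x+y)" using g by (simp add: good_def)
    also have "x + y = (x - x0) + (y + x0)" by simp
    also have "norm \<dots> \<le> norm (x - x0) + norm (y + x0)" by (rule norm_triangle_ineq)
    finally show ?thesis by simp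
  qed
  have Sne: "S \<noteq> {}" using G0 unfolding S_def by blast
  have Sbdd: "bdd_above S" unfolding S_def bdd_above_def using key[OF _ G0] by auto
  define c where "c = Sup S"
  have c_ge: "a - norm (x - x0) \<le> c" if "(x,a)\<in>G" for x a
    unfolding c_def by (rule cSup_upper[OF _ Sbdd]) (use that S_def in blast)
  have c_le: "c \<le> norm (y + x0) - b" if "(y,b)\<in>G" for y b
    unfolding c_def by (rule cSup_least[OF Sne]) (use key that S_def in blast)
  define G' where "G' = {(x + t *\<^sub>R x0, a + t*c) | x a t. (x,a)\<in>G}"
  have gadd: "(x+y,a+b)\<in>G" if "(x,a)\<in>G" "(y,b)\<in>G" for x a y b using g that by (simp add: good_def)
  have gsc: "(t *\<^sub>R x, t*a)\<in>G" if "(x,a)\<in>G" for t x a using g that by (simp add: good_def)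
  have gfun: "a = b" if "(x,a)\<in>G" "(x,b)\<in>G" for x a b using g that by (simp add: good_def)
  have gdom: "a \<le> norm x" if "(x,a)\<in>G" for x a using g that by (simp add: good_def)
  have "good G'"
    unfolding good_def
  proof (intro conjI allI impI)
    show "(0,0) \<in> G'" unfolding G'_def using G0 by force
  next
    fix x a y b assume "(x,a)\<in>G'" "(y,b)\<in>G'"
    then obtain x1 a1 t1 x2 a2 t2 where "(x1,a1)\<in>G" "(x2,a2)\<in>G" "x = x1 + t1 *\<^sub>R x0" "a = a1 + t1*c"
       "y = x2 + t2 *\<^sub>R x0" "b = a2 + t2*c" unfolding G'_def by blast
    moreover have "x + y = (x1+x2) + (t1+t2) *\<^sub>R x0" "a + b = (a1+a2) + (t1+t2)*c"
      using calculation by (auto simp: algebra_simps)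
    ultimately show "(x+y,a+b)\<in>G'" unfolding G'_def using gadd by blast
  next
    fix t x a assume "(x,a)\<in>G'"
    then obtain x1 a1 t1 where "(x1,a1)\<in>G" "x = x1 + t1 *\<^sub>R x0" "a = a1 + t1*c" unfolding G'_def by blast
    moreover have "t *\<^sub>R x = t *\<^sub>R x1 + (t*t1) *\<^sub>R x0" "t * a = t*a1 + (t*t1)*c"
      using calculation by (auto simp: algebra_simps)
    ultimately show "(t *\<^sub>R x, t*a)\<in>G'" unfolding G'_def using gsc by blast
  next
    fix x a b assume "(x,a)\<in>G'" "(x,b)\<in>G'"
    then obtain x1 a1 t1 x2 a2 t2 where h: "(x1,a1)\<in>G" "(x2,a2)\<in>G" "x = x1 + t1 *\<^sub>R x0" "a = a1 + t1*c"
       "x = x2 + t2 *\<^sub>R x0" "b = a2 + t2*c" unfolding G'_def by blast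
    have "t1 = t2"
    proof (rule ccontr)
      assume ne: "t1 \<noteq> t2"
      have "(x2 + (-1) *\<^sub>R x1, a2 + (-1)*a1) \<in> G" using h gadd gsc by blast
      then have "((1/(t1-t2)) *\<^sub>R (x2 + (-1) *\<^sub>R x1), (1/(t1-t2)) * (a2 + (-1)*a1)) \<in> G" using gsc by blast
      moreover have "(1/(t1-t2)) *\<^sub>R (x2 + (-1) *\<^sub>R x1) = x0"
      proof -
        have "x2 - x1 = (t1 - t2) *\<^sub>R x0" using h by (simp add: algebra_simps)
        then show ?thesis using ne by (simp add: scaleR_diff_right[symmetric])
      qed
      ultimately show False using x0 by metis
    qed
    with h have "x1 = x2" by simp
    with h \<open>t1 = t2\<close> gfun show "a = b" by blast
  next
    fix x a assume "(x,a)\<in>G'"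
    then obtain x1 a1 t where h: "(x1,a1)\<in>G" "x = x1 + t *\<^sub>R x0" "a = a1 + t*c" unfolding G'_def by blast
    show "a \<le> norm x"
    proof (cases "t = 0")
      case True then show ?thesis using h gdom by simp
    next
      case False
      show ?thesis
      proof (cases "t > 0")
        case True
        have "((1/t) *\<^sub>R x1, (1/t)*a1) \<in> G" using gsc h by blast
        from c_le[OF this] have "t * c \<le> t * (norm ((1/t) *\<^sub>R x1 + x0) - (1/t)*a1)"
          using True by (simp add: mult_left_mono)
        also have "\<dots> = norm (t *\<^sub>R ((1/t) *\<^sub>R x1 + x0)) - a1" using True by (simp add: right_diff_distrib)
        also have "t *\<^sub>R ((1/t) *\<^sub>R x1 + x0) = x" using h True by (simp add: scaleR_add_right)
        finally show ?thesis using h by simp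
      next
        case False
        with \<open>t \<noteq> 0\<close> have s: "-t > 0" by simp
        define u where "u = (1/(-t)) *\<^sub>R x1 - x0"
        have "((1/(-t)) *\<^sub>R x1, (1/(-t))*a1) \<in> G" using gsc h by blast
        from c_ge[OF this] have "(1/(-t))*a1 - norm u \<le> c" unfolding u_def .
        then have "(-t) * ((1/(-t))*a1 - norm u) \<le> (-t) * c"
          using s by (intro mult_left_mono) auto
        moreover have "(-t) * ((1/(-t))*a1 - norm u) = a1 - norm ((-t) *\<^sub>R u)"
          using s by (simp add: right_diff_distrib)
        moreover have "(-t) *\<^sub>R u = x" unfolding u_def using h s by (simp add: scaleR_diff_right)
        ultimately have "a1 - norm x \<le> (-t) * c" by metis
        then show ?thesis using h by simp
      qed
    qed
  qed
  moreover have "G \<subseteq> G'" unfolding G'_def by force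
  moreover have "(x0, c) \<in> G'" unfolding G'_def using G0 by force
  ultimately show ?thesis using x0 by blast
qed


lemma good_chain:
  assumes "C \<noteq> {}" "\<forall>G\<in>C. good G" "\<forall>X\<in>C. \<forall>Y\<in>C. X \<subseteq> Y \<or> Y \<subseteq> X"
  shows "good (\<Union>C)"
proof -
  have two: "\<exists>G\<in>C. p \<in> G \<and> q \<in> G" if "p \<in> \<Union>C" "q \<in> \<Union>C" for p q
    using that assms(3) by blast
  obtain G1 where "G1 \<in> C" using assms(1) by blast
  show ?thesis unfolding good_def
  proof (intro conjI allI impI)
    show "(0,0) \<in> \<Union>C" using \<open>G1 \<in> C\<close> assms(2) by (auto simp: good_def)
  next
    fix x a y b assume "(x,a) \<in> \<Union>C" "(y,b) \<in> \<Union>C"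
    then obtain G where "G \<in> C" "(x,a)\<in>G" "(y,b)\<in>G" using two by blast
    then show "(x+y,a+b) \<in> \<Union>C" using assms(2) good_def by (metis (no_types, lifting) UnionI)
  next
    fix t x a assume "(x,a) \<in> \<Union>C"
    then obtain G where "G \<in> C" "(x,a)\<in>G" by blast
    then show "(t *\<^sub>R x,t*a) \<in> \<Union>C" using assms(2) good_def by (metis (no_types, lifting) UnionI)
  next
    fix x a b assume "(x,a) \<in> \<Union>C" "(x,b) \<in> \<Union>C"
    then obtain G where "G \<in> C" "(x,a)\<in>G" "(x,b)\<in>G" using two by blast
    then show "a = b" using assms(2) good_def by (metis (no_types, lifting) UnionI)
  next
    fix x a assume "(x,a) \<in> \<Union>C"
    then obtain G where "G \<in> C" "(x,a)\<in>G" by blast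
    then show "a \<le> norm x" using assms(2) good_def by (metis (no_types, lifting) UnionI)
  qed
qed

lemma real_HB:
  fixes M :: "'a::real_normed_vector set"
  assumes M0: "0 \<in> M" and Madd: "\<forall>x\<in>M. \<forall>y\<in>M. x+y\<in>M" and Msc: "\<forall>t. \<forall>x\<in>M. t *\<^sub>R x \<in> M"
    and Mcl: "closed M" and w: "w \<notin> M"
  shows "\<exists>\<phi>. (\<forall>x y. \<phi>(x+y) = \<phi> x + \<phi> y) \<and> (\<forall>t x. \<phi>(t *\<^sub>R x) = t * \<phi> x)
     \<and> (\<forall>x. \<phi> x \<le> norm x) \<and> (\<forall>m\<in>M. \<phi> m = 0) \<and> \<phi> w \<noteq> 0"
proof -
  define d where "d = infdist w M"
  have dpos: "d > 0" unfolding d_def using infdist_pos_not_in_closed[OF Mcl _ w] M0 by blast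
  define G0 where "G0 = {(m + t *\<^sub>R w, t*d) | m t. m\<in>M}"
  have "good G0" unfolding good_def
  proof (intro conjI allI impI)
    show "(0,0) \<in> G0" unfolding G0_def using M0 by force
  next
    fix x a y b assume "(x,a)\<in>G0" "(y,b)\<in>G0"
    then obtain m1 t1 m2 t2 where h: "m1\<in>M" "m2\<in>M" "x = m1 + t1 *\<^sub>R w" "a = t1*d" "y = m2 + t2 *\<^sub>R w" "b = t2*d"
      unfolding G0_def by blast
    then have "x + y = (m1+m2) + (t1+t2) *\<^sub>R w" "a+b = (t1+t2)*d" by (auto simp: algebra_simps)
    then show "(x+y,a+b)\<in>G0" unfolding G0_def using Madd h by blast
  next
    fix s x a assume "(x,a)\<in>G0"
    then obtain m1 t1 where h: "m1\<in>M" "x = m1 + t1 *\<^sub>R w" "a = t1*d" unfolding G0_def by blast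
    then have "s *\<^sub>R x = s *\<^sub>R m1 + (s*t1) *\<^sub>R w" "s*a = (s*t1)*d" by (auto simp: algebra_simps)
    then show "(s *\<^sub>R x,s*a)\<in>G0" unfolding G0_def using Msc h by blast
  next
    fix x a b assume "(x,a)\<in>G0" "(x,b)\<in>G0"
    then obtain m1 t1 m2 t2 where h: "m1\<in>M" "m2\<in>M" "x = m1 + t1 *\<^sub>R w" "a = t1*d" "x = m2 + t2 *\<^sub>R w" "b = t2*d"
      unfolding G0_def by blast
    have "t1 = t2"
    proof (rule ccontr)
      assume ne: "t1 \<noteq> t2"
      have "m2 + (-1) *\<^sub>R m1 \<in> M" using h Madd Msc by blast
      then have "(1/(t1-t2)) *\<^sub>R (m2 + (-1) *\<^sub>R m1) \<in> M" using Msc by blast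
      moreover have "m2 - m1 = (t1 - t2) *\<^sub>R w" using h by (simp add: algebra_simps)
      then have "(1/(t1-t2)) *\<^sub>R (m2 + (-1) *\<^sub>R m1) = w" using ne by (simp add: scaleR_diff_right[symmetric])
      ultimately show False using w by simp
    qed
    then show "a = b" using h by simp
  next
    fix x a assume "(x,a)\<in>G0"
    then obtain m t where h: "m\<in>M" "x = m + t *\<^sub>R w" "a = t*d" unfolding G0_def by blast
    show "a \<le> norm x"
    proof (cases "t > 0")
      case False then show ?thesis using h dpos by (simp add: mult_nonpos_nonneg order_trans[OF _ norm_ge_zero])
    next
      case True
      have "-(1/t) *\<^sub>R m \<in> M" using Msc h by blast
      then have "d \<le> dist w (-(1/t) *\<^sub>R m)" unfolding d_def by (rule infdist_le)
      also have "dist w (-(1/t) *\<^sub>R m) = norm ((1/t) *\<^sub>R x)" using h True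
        by (simp add: dist_norm scaleR_add_right algebra_simps)
      also have "\<dots> = norm x / t" using True by simp
      finally show ?thesis using h True by (simp add: field_simps)
    qed
  qed
  define A where "A = {G. good G \<and> G0 \<subseteq> G}"
  have "\<exists>G\<in>A. \<forall>X\<in>A. G \<subseteq> X \<longrightarrow> X = G"
  proof (rule subset_Zorn_nonempty)
    show "A \<noteq> {}" using \<open>good G0\<close> A_def by blast
  next
    fix C assume "C \<noteq> {}" "subset.chain A C"
    then have "C \<subseteq> A" "\<forall>X\<in>C. \<forall>Y\<in>C. X \<subseteq> Y \<or> Y \<subseteq> X" by (auto simp: subset.chain_def)
    then show "\<Union>C \<in> A" using good_chain[OF \<open>C \<noteq> {}\<close>] \<open>C \<noteq> {}\<close> unfolding A_def by blast
  qed
  then obtain G where GA: "G \<in> A" and max: "\<forall>X\<in>A. G \<subseteq> X \<longrightarrow> X = G" by blast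
  have gG: "good G" and G0G: "G0 \<subseteq> G" using GA A_def by auto
  have full: "\<exists>a. (x,a)\<in>G" for x
  proof (rule ccontr)
    assume "\<nexists>a. (x, a) \<in> G"
    then obtain G' where "good G'" "G \<subset> G'" using good_extend[OF gG] by blast
    then show False using max G0G A_def by blast
  qed
  define \<phi> where "\<phi> x = (SOME a. (x,a)\<in>G)" for x
  have phiG: "(x, \<phi> x) \<in> G" for x unfolding \<phi>_def using full by (rule someI_ex)
  have phi_eq: "\<phi> x = a" if "(x,a)\<in>G" for x a using gG phiG[of x] that by (auto simp: good_def)
  show ?thesis
  proof (intro exI conjI allI ballI)
    fix x y show "\<phi>(x+y) = \<phi> x + \<phi> y" using gG phiG phi_eq by (simp add: good_def)
  next
    fix t x show "\<phi>(t *\<^sub>R x) = t * \<phi> x" using gG phiG phi_eq by (simp add: good_def)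
  next
    fix x show "\<phi> x \<le> norm x" using gG phiG by (simp add: good_def)
  next
    fix m assume "m \<in> M"
    then have "(m, 0) \<in> G" using G0G unfolding G0_def by force
    then show "\<phi> m = 0" by (rule phi_eq)
  next
    have "(w, d) \<in> G" using G0G M0 unfolding G0_def by force
    then show "\<phi> w \<noteq> 0" using phi_eq dpos by force
  qed
qed


lemma scaleC_zero_left: "(0::complex) *\<^sub>C (x::'a::complex_banach) = 0"
  using scaleC_of_real[of 0 x] by simp

lemma scaleC_minus1: "(-1::complex) *\<^sub>C (x::'a::complex_banach) = - x"
  using scaleC_of_real[of "-1" x] by simp
lemma scaleC_decomp: "c *\<^sub>C (x::'a::complex_banach) = Re c *\<^sub>R x + Im c *\<^sub>R (\<i> *\<^sub>C x)"
proof -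
  have "c = complex_of_real (Re c) + complex_of_real (Im c) * \<i>" by (simp add: complex_eq_iff)
  then have "c *\<^sub>C x = complex_of_real (Re c) *\<^sub>C x + complex_of_real (Im c) *\<^sub>C (\<i> *\<^sub>C x)"
    by (metis scaleC_add_left scaleC_scaleC)
  then show ?thesis by (simp add: scaleC_of_real)
qed
lemma "\<i> *\<^sub>C (\<i> *\<^sub>C x) = - (x::'a::complex_banach)"
    by (simp add: scaleC_scaleC scaleC_minus1)
lemma complex_HB:
  fixes M :: "'a::complex_banach set"
  assumes "closed_csubspace M" "w \<notin> M"
  shows "\<exists>g. bounded_functional g \<and> (\<forall>m\<in>M. g m = 0) \<and> g w \<noteq> 0"
proof -
  have cs: "csubspace M" and cl: "closed M" using assms(1) by (auto simp: closed_csubspace_def)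
  have M0: "0 \<in> M" and Madd: "\<forall>x\<in>M. \<forall>y\<in>M. x+y\<in>M" and MC: "\<forall>c. \<forall>x\<in>M. c *\<^sub>C x \<in> M"
    using cs by (auto simp: csubspace_def)
  have Msc: "\<forall>t. \<forall>x\<in>M. t *\<^sub>R x \<in> M" using MC by (metis scaleC_of_real)
  obtain \<phi> where padd: "\<And>x y. \<phi>(x+y) = \<phi> x + \<phi> y" and psc: "\<And>t x. \<phi>(t *\<^sub>R x) = t * \<phi> x"
    and pn: "\<And>x. \<phi> x \<le> norm x" and pM: "\<And>m. m\<in>M \<Longrightarrow> \<phi> m = 0" and pw: "\<phi> w \<noteq> 0"
    using real_HB[OF M0 Madd Msc cl assms(2)] by blast
  have pabs: "\<bar>\<phi> x\<bar> \<le> norm x" for x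
  proof -
    have "\<phi> (-x) = - \<phi> x" using psc[of "-1" x] by simp
    then show ?thesis using pn[of x] pn[of "-x"] by simp
  qed
  define g where "g x = complex_of_real (\<phi> x) - \<i> * complex_of_real (\<phi> (\<i> *\<^sub>C x))" for x
  have ii: "\<i> *\<^sub>C (\<i> *\<^sub>C x) = - x" for x :: 'a
    by (simp add: scaleC_scaleC scaleC_minus1)
  have pneg: "\<phi> (- x) = - \<phi> x" for x using psc[of "-1" x] by simp
  have gadd: "g (x + y) = g x + g y" for x y
    proof -
    have "\<i> *\<^sub>C (x+y) = \<i> *\<^sub>C x + \<i> *\<^sub>C y" by (rule scaleC_add_right)
    then have "g (x+y) = complex_of_real (\<phi> x + \<phi> y) - \<i> * complex_of_real (\<phi> (\<i> *\<^sub>C x) + \<phi> (\<i> *\<^sub>C y))"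
      unfolding g_def by (simp only: padd)
    then show ?thesis unfolding g_def by (simp add: algebra_simps)
  qed
  have gsc: "g (c *\<^sub>C x) = c * g x" for c x
proof -
  define a where "a = Re c"
  define b where "b = Im c"
  have i1: "\<i> *\<^sub>C (a *\<^sub>R x + b *\<^sub>R (\<i> *\<^sub>C x)) = a *\<^sub>R (\<i> *\<^sub>C x) + b *\<^sub>R (- x)"
  proof -
  have "\<i> *\<^sub>C (a *\<^sub>R x + b *\<^sub>R (\<i> *\<^sub>C x)) = \<i> *\<^sub>C (a *\<^sub>R x) + \<i> *\<^sub>C (b *\<^sub>R (\<i> *\<^sub>C x))"
    by (rule scaleC_add_right)
  also have "\<i> *\<^sub>C (a *\<^sub>R x) = a *\<^sub>R (\<i> *\<^sub>C x)"
    by (metis scaleC_of_real scaleC_scaleC mult.commute)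
  also have "\<i> *\<^sub>C (b *\<^sub>R (\<i> *\<^sub>C x)) = b *\<^sub>R (\<i> *\<^sub>C (\<i> *\<^sub>C x))"
    by (metis scaleC_of_real scaleC_scaleC mult.commute)
  finally show ?thesis by (simp only: ii)
  qed
  have "g (c *\<^sub>C x) = g (a *\<^sub>R x + b *\<^sub>R (\<i> *\<^sub>C x))" unfolding a_def b_def by (rule arg_cong[where f=g, OF scaleC_decomp])
  also have "\<dots> = complex_of_real (a * \<phi> x + b * \<phi> (\<i> *\<^sub>C x)) - \<i> * complex_of_real (a * \<phi> (\<i> *\<^sub>C x) + b * (- \<phi> x))"
    by (simp only: g_def i1 padd psc pneg)
  also have "\<dots> = c * g x" unfolding g_def a_def b_def
    by (simp add: complex_eq_iff algebra_simps)
  finally show ?thesis .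
qed
  have gb: "norm (g x) \<le> norm x * 2" for x
  proof -
    have "norm (g x) \<le> norm (complex_of_real (\<phi> x)) + norm (\<i> * complex_of_real (\<phi> (\<i> *\<^sub>C x)))"
      unfolding g_def by (rule norm_triangle_ineq4)
    also have "\<dots> = \<bar>\<phi> x\<bar> + \<bar>\<phi> (\<i> *\<^sub>C x)\<bar>" by (simp add: norm_mult)
    also have "\<dots> \<le> norm x + norm (\<i> *\<^sub>C x)" using pabs by (intro add_mono) auto
    also have "norm (\<i> *\<^sub>C x) = norm x" by (simp add: norm_scaleC)
    finally show ?thesis by simp
  qed
  have "bounded_functional g" unfolding bounded_functional_def using gadd gsc gb by blast
  moreover have "\<forall>m\<in>M. g m = 0" unfolding g_def using pM MC by simp
  moreover have "g w \<noteq> 0" unfolding g_def using pw by (simp add: complex_eq_iff)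
  ultimately show ?thesis by blast
qed


lemma subset_cspan: "A \<subseteq> cspan A"
  unfolding cspan_def by (rule Inter_greatest) blast

lemma subset_cjoin: "A \<in> F \<Longrightarrow> A \<subseteq> cjoin F"
  unfolding cjoin_def by (meson Union_upper closure_subset subset_cspan subset_trans)

lemma above_minus:
  assumes "nest \<E>" "E \<in> \<E>" "K \<in> \<E>" "\<not> E \<subseteq> nest_minus \<E> K"
  shows "K \<subseteq> E"
proof -
  have "E \<subseteq> K \<or> K \<subseteq> E" using assms by (auto simp: nest_def)
  moreover have "\<not> E \<subset> K"
  proof
    assume "E \<subset> K"
    then have "E \<subseteq> nest_minus \<E> K" unfolding nest_minus_def using assms(2) by (intro subset_cjoin) blast
    then show False using assms(4) by blast
  qed
  ultimately show ?thesis by blast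
qed

lemma rank_one_alg:
  assumes nest: "nest \<E>" and K: "K \<in> \<E>" and h: "bounded_functional h"
    and hv: "\<forall>v\<in>nest_minus \<E> K. h v = 0" and z: "z \<in> K"
  shows "rank_one h z \<in> nest_alg \<E>"
proof -
  obtain C where hC: "\<And>a. norm (h a) \<le> norm a * C" and hadd: "\<And>a b. h (a+b) = h a + h b"
    and hsc: "\<And>c a. h (c *\<^sub>C a) = c * h a"
    using h unfolding bounded_functional_def by blast
  have "bounded_op (rank_one h z)"
    unfolding bounded_op_def rank_one_def
  proof (intro conjI allI exI)
    fix a b show "h (a + b) *\<^sub>C z = h a *\<^sub>C z + h b *\<^sub>C z" by (simp add: hadd scaleC_add_left)
  next
    fix c a show "h (c *\<^sub>C a) *\<^sub>C z = c *\<^sub>C h a *\<^sub>C z" by (simp add: hsc scaleC_scaleC)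
  next
    fix a
    have "norm (h a *\<^sub>C z) = norm (h a) * norm z" by (simp add: norm_scaleC)
    also have "\<dots> \<le> (norm a * C) * norm z" by (intro mult_right_mono hC) simp
    finally show "norm (h a *\<^sub>C z) \<le> norm a * (C * norm z)" by (simp add: mult.assoc)
  qed
  moreover have "rank_one h z ` E \<subseteq> E" if E: "E \<in> \<E>" for E
  proof -
    have cs: "csubspace E" using nest E by (auto simp: nest_def closed_csubspace_def)
    show ?thesis
    proof (cases "E \<subseteq> nest_minus \<E> K")
      case True
      then have "rank_one h z v = 0" if "v \<in> E" for v
        using hv that by (auto simp: rank_one_def scaleC_zero_left)
      then show ?thesis using cs by (auto simp: csubspace_def)
    next
      case False
      then have "z \<in> E" using above_minus[OF nest E K] z by blast
      then show ?thesis using cs by (auto simp: csubspace_def rank_one_def)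
    qed
  qed
  ultimately show ?thesis by (auto simp: nest_alg_def)
qed

theorem mainTheorem13:
  fixes \<E> :: "'a::complex_banach set set" and J :: "('a \<Rightarrow> 'a) set" and L N :: "'a set"
  assumes "nest \<E>" and "bimodule \<E> J"
    and "L \<in> \<E>" and "N \<in> \<E>"
    and "nest_minus \<E> L \<subset> ess_support \<E> J N"
  shows "\<forall>f \<in> annihilator (nest_minus \<E> N). \<forall>x \<in> L. rank_one f x \<in> J"
proof (intro ballI)
  fix f x assume f: "f \<in> annihilator (nest_minus \<E> N)" and x: "x \<in> L"
  define Lm where "Lm = nest_minus \<E> L"
  have LmE: "Lm \<in> \<E>" using assms(1) unfolding Lm_def nest_minus_def nest_def by auto
  have "\<exists>T\<in>J. \<exists>y\<in>N. T y \<notin> Lm"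
  proof (rule ccontr)
    assume "\<not> ?thesis"
    then have sub: "\<forall>T\<in>J. T ` N \<subseteq> Lm" by blast
    have "0 \<in> cspan {}" unfolding cspan_def csubspace_def by blast
    then have "\<forall>T\<in>J. fin_dim_quot (T ` N) Lm" using sub unfolding fin_dim_quot_def
      by (intro ballI exI[of _ "{}"]) force
    then have "ess_support \<E> J N \<subseteq> Lm" unfolding ess_support_def using LmE by blast
    then show False using assms(5) Lm_def by blast
  qed
  then obtain T y where T: "T \<in> J" and y: "y \<in> N" and Ty: "T y \<notin> Lm" by blast
  have "closed_csubspace Lm" using LmE assms(1) by (auto simp: nest_def)
  then obtain g where g: "bounded_functional g" and gv: "\<forall>m\<in>Lm. g m = 0" and gT: "g (T y) \<noteq> 0"
    using complex_HB Ty by blast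
  have fb: "bounded_functional f" and fv: "\<forall>v\<in>nest_minus \<E> N. f v = 0"
    using f by (auto simp: annihilator_def)
  have B: "rank_one f y \<in> nest_alg \<E>" by (rule rank_one_alg[OF assms(1) assms(4) fb fv y])
  have A: "rank_one g x \<in> nest_alg \<E>" by (rule rank_one_alg[OF assms(1) assms(3) g gv[unfolded Lm_def] x])
  have bm: "\<forall>A\<in>nest_alg \<E>. \<forall>T\<in>J. A \<circ> T \<in> J \<and> T \<circ> A \<in> J" and Jsc: "\<forall>c. \<forall>T\<in>J. (\<lambda>x. c *\<^sub>C T x) \<in> J"
    and Jb: "J \<subseteq> {T. bounded_op T}"
    using assms(2) by (auto simp: bimodule_def)
  have "T \<circ> rank_one f y \<in> J" using bm B T by blast
  then have P: "rank_one g x \<circ> (T \<circ> rank_one f y) \<in> J" using bm A by blast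
  have Tsc: "T (c *\<^sub>C v) = c *\<^sub>C T v" for c v using Jb T by (auto simp: bounded_op_def)
  have "(\<lambda>v. (1 / g (T y)) *\<^sub>C (rank_one g x \<circ> (T \<circ> rank_one f y)) v) = rank_one f x"
  proof
    fix v
    have "(rank_one g x \<circ> (T \<circ> rank_one f y)) v = (f v * g (T y)) *\<^sub>C x"
      using g Tsc by (simp add: rank_one_def bounded_functional_def)
    then show "(1 / g (T y)) *\<^sub>C (rank_one g x \<circ> (T \<circ> rank_one f y)) v = rank_one f x v"
      using gT by (simp add: scaleC_scaleC rank_one_def)
  qed
  then show "rank_one f x \<in> J" using Jsc P by metis
qed

end
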